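(* Let $p$ be a prime, $e\ge 1$, and $G$ a finite abelian group of order $p^e$. For a representation $\rho$ of level $k$, let $j_\rho\colon\mathbf{Z}[G]\to\mathbf{Z}[\omega_k]$ be the ring homomorphism induced by $g\mapsto\rho(g)$, where $\omega_k=\exp(2\pi i/p^k)$. If $\rho$ and $\tau$ are not equivalent, then $j_\rho(b_\tau)=0$. Furthermore $j_1(b_1)=p^e$, and $j_\rho(b_\rho)=p^{e-k}(1-\omega)$ if $\rho$ has level $k>0$.
   Context: A representation is a group homomorphism $\rho\colon G\to\mathbf{C}^*$; it has level $k$ if $\rho(G)$ has $p^k$ elements (so $\rho(G)\subset\mathbf{Z}[\omega_k]$). Two representations are equivalent if they have the same kernel. Write $\omega=\exp(2\pi i/p)$. For $\rho$ of level $k>0$ set $b_\rho=\sum_{x\in G,\ \rho(x)=1}x-\sum_{\xi\in G,\ \rho(\xi)=\omega}\xi\in\mathbf{Z}[G]$. For the trivial representation $1$ set $b_1=\sum_{x\in G}x$. *)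

theory Defs
  imports Complex_Main "HOL-Algebra.Group" "HOL-Computational_Algebra.Primes"
begin

definition is_rep :: "('a, 'b) monoid_scheme \<Rightarrow> ('a \<Rightarrow> complex) \<Rightarrow> bool" where
  "is_rep G \<rho> \<longleftrightarrow> (\<forall>x\<in>carrier G. \<rho> x \<noteq> 0) \<and>
     (\<forall>x\<in>carrier G. \<forall>y\<in>carrier G. \<rho> (x \<otimes>\<^bsub>G\<^esub> y) = \<rho> x * \<rho> y)"

definition has_level :: "('a, 'b) monoid_scheme \<Rightarrow> nat \<Rightarrow> ('a \<Rightarrow> complex) \<Rightarrow> nat \<Rightarrow> bool" where
  "has_level G p \<rho> k \<longleftrightarrow> card (\<rho> ` carrier G) = p ^ k"

definition rep_kernel :: "('a, 'b) monoid_scheme \<Rightarrow> ('a \<Rightarrow> complex) \<Rightarrow> 'a set" where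
  "rep_kernel G \<rho> = {x \<in> carrier G. \<rho> x = 1}"

definition rep_equiv :: "('a, 'b) monoid_scheme \<Rightarrow> ('a \<Rightarrow> complex) \<Rightarrow> ('a \<Rightarrow> complex) \<Rightarrow> bool" where
  "rep_equiv G \<rho> \<tau> \<longleftrightarrow> rep_kernel G \<rho> = rep_kernel G \<tau>"

definition omega :: "nat \<Rightarrow> complex" where
  "omega n = exp (2 * pi * \<i> / of_nat n)"

definition triv_rep :: "'a \<Rightarrow> complex" where
  "triv_rep = (\<lambda>_. 1)"

text \<open>Elements of Z[G] for finite G are represented by their coefficient functions
  (zero outside the carrier).\<close>
definition b_elem :: "('a, 'b) monoid_scheme \<Rightarrow> nat \<Rightarrow> ('a \<Rightarrow> complex) \<Rightarrow> 'a \<Rightarrow> int" where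
  "b_elem G p \<tau> x =
     (if x \<notin> carrier G then 0
      else if (\<forall>y\<in>carrier G. \<tau> y = 1) then 1
      else (if \<tau> x = 1 then 1 else 0) - (if \<tau> x = omega p then 1 else 0))"

definition j_map :: "('a, 'b) monoid_scheme \<Rightarrow> ('a \<Rightarrow> complex) \<Rightarrow> ('a \<Rightarrow> int) \<Rightarrow> complex" where
  "j_map G \<rho> f = (\<Sum>x\<in>carrier G. of_int (f x) * \<rho> x)"

end

theory Submission
  imports Defs "HOL-Algebra.Multiplicative_Group"
begin

lemma pow_gcd_one:
  fixes w :: complex
  shows "w ^ a = 1 \<Longrightarrow> w ^ b = 1 \<Longrightarrow> w ^ (gcd a b) = 1"
proof (induction a b rule: gcd_nat_induct)
  case (step m n)
  have "w ^ m = w ^ (n * (m div n) + m mod n)" by simp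
  also have "\<dots> = (w ^ n) ^ (m div n) * w ^ (m mod n)" by (simp only: power_add power_mult)
  finally have "w ^ (m mod n) = 1" using step.prems by simp
  then have "w ^ gcd n (m mod n) = 1" using step by simp
  then show ?case by (metis gcd.commute gcd_red_nat)
qed simp

lemma omega_pow: "p > 0 \<Longrightarrow> omega p ^ p = 1"
proof -
  assume "p > 0"
  have "omega p ^ p = exp (of_nat p * (2 * pi * \<i> / of_nat p))"
    by (simp only: omega_def exp_of_nat_mult)
  also have "\<dots> = exp (2 * pi * \<i>)" using \<open>p > 0\<close> by simp
  finally show ?thesis by simp
qed

lemma root_p_omega:
  fixes w :: complex and p :: nat
  assumes "prime p" "w ^ p = 1" "w \<noteq> 1"
  shows "\<exists>n. w ^ n = omega p"
proof -
  have p0: "p > 0" using assms prime_gt_0_nat by blast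
  have w0: "w \<noteq> 0"
  proof
    assume "w = 0" then have "w ^ p = 0" using p0 by simp
    then show False using assms(2) by simp
  qed
  have inj: "inj_on (\<lambda>i. w ^ i) {..<p}"
  proof (rule linorder_inj_onI')
    fix i j assume ij0: "i \<in> {..<p}" "j \<in> {..<p}" "i < j"
    show "w ^ i \<noteq> w ^ j"
    proof
    assume "w ^ i = w ^ j"
    note ij = ij0 this
    have "w ^ j = w ^ i * w ^ (j - i)" using ij
      by (metis le_add_diff_inverse less_imp_le power_add)
    then have d: "w ^ (j - i) = 1" using ij w0 by simp
    have "\<not> p dvd (j - i)" using ij by (auto dest: dvd_imp_le)
    then have "coprime p (j - i)" using assms(1) prime_imp_coprime by blast
    then have "gcd (j - i) p = 1" by (simp add: coprime_iff_gcd_eq_1 gcd.commute)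
    then have "w ^ 1 = 1" using pow_gcd_one[OF d assms(2)] by simp
    then show False using assms by simp
    qed
  qed
  have sub: "(\<lambda>i. w ^ i) ` {..<p} \<subseteq> {z. z ^ p = 1}"
  proof
    fix z assume "z \<in> (\<lambda>i. w ^ i) ` {..<p}"
    then obtain i where "z = w ^ i" by blast
    then have "z ^ p = (w ^ p) ^ i" by (metis power_mult mult.commute)
    then show "z \<in> {z. z ^ p = 1}" using assms(2) by simp
  qed
  have "card ((\<lambda>i. w ^ i) ` {..<p}) = card {z::complex. z ^ p = 1}"
    using card_image[OF inj] card_roots_unity_eq[OF p0] by simp
  then have eq: "(\<lambda>i. w ^ i) ` {..<p} = {z. z ^ p = 1}"
    by (rule card_subset_eq[OF finite_nth_roots[OF p0] sub])
  have "omega p \<in> {z. z ^ p = 1}" using omega_pow[OF p0] by simp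
  then have "omega p \<in> (\<lambda>i. w ^ i) ` {..<p}" using eq by simp
  then obtain i where "omega p = w ^ i" by (rule imageE)
  then show ?thesis by (intro exI[of _ i]) (rule sym)
qed

lemma ex_step: "\<not> P (0::nat) \<Longrightarrow> P e \<Longrightarrow> \<exists>m. \<not> P m \<and> P (Suc m)"
  by (induction e) auto

lemma root_pe_omega:
  fixes z :: complex and p :: nat
  assumes "prime p" "z ^ (p ^ e) = 1" "z \<noteq> 1"
  shows "\<exists>n. z ^ n = omega p"
proof -
  obtain m where m: "z ^ (p ^ m) \<noteq> 1" "z ^ (p ^ Suc m) = 1"
    using ex_step[of "\<lambda>m. z ^ (p ^ m) = 1"] assms by auto
  have "(z ^ (p ^ m)) ^ p = 1" using m by (simp add: power_mult[symmetric] mult.commute)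
  then obtain n where "(z ^ (p ^ m)) ^ n = omega p" using root_p_omega assms m by blast
  then show ?thesis by (metis power_mult)
qed

lemma rep_one: "group G \<Longrightarrow> is_rep G \<rho> \<Longrightarrow> \<rho> \<one>\<^bsub>G\<^esub> = 1"
  unfolding is_rep_def
  by (metis group.is_monoid monoid.one_closed monoid.l_one mult_cancel_right1 mult.commute)

lemma rep_pow:
  assumes "group G" "is_rep G \<rho>" "x \<in> carrier G"
  shows "\<rho> (x [^]\<^bsub>G\<^esub> (n::nat)) = \<rho> x ^ n"
proof (induction n)
  case 0 then show ?case using rep_one[OF assms(1,2)] by simp
next
  case (Suc n)
  interpret G: group G by (rule assms(1))
  have mult: "\<And>x y. x \<in> carrier G \<Longrightarrow> y \<in> carrier G \<Longrightarrow> \<rho> (x \<otimes>\<^bsub>G\<^esub> y) = \<rho> x * \<rho> y"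
    using assms(2) unfolding is_rep_def by blast
  have "\<rho> (x [^]\<^bsub>G\<^esub> Suc n) = \<rho> (x [^]\<^bsub>G\<^esub> n \<otimes>\<^bsub>G\<^esub> x)" by (simp only: G.nat_pow_Suc)
  also have "\<dots> = \<rho> (x [^]\<^bsub>G\<^esub> n) * \<rho> x" using assms(3) by (intro mult) simp_all
  finally show ?case using Suc.IH by simp
qed

lemma rep_omega:
  assumes "prime p" "group G" "finite (carrier G)" "card (carrier G) = p ^ e"
    "is_rep G \<tau>" "x \<in> carrier G" "\<tau> x \<noteq> 1"
  shows "\<exists>\<xi>\<in>carrier G. \<tau> \<xi> = omega p"
proof -
  interpret G: group G by (rule assms(2))
  have "x [^]\<^bsub>G\<^esub> order G = \<one>\<^bsub>G\<^esub>" using assms(6) by (rule G.pow_order_eq_1)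
  then have "\<tau> (x [^]\<^bsub>G\<^esub> (p ^ e)) = 1" using assms(4) rep_one[OF assms(2,5)]
    by (simp add: order_def)
  then have "\<tau> x ^ (p ^ e) = 1" using rep_pow[OF assms(2,5,6)] by simp
  then obtain n where n: "\<tau> x ^ n = omega p" using root_pe_omega assms(1,7) by blast
  have "x [^]\<^bsub>G\<^esub> n \<in> carrier G" using assms(6) by simp
  moreover have "\<tau> (x [^]\<^bsub>G\<^esub> n) = omega p" using n rep_pow[OF assms(2,5,6)] by simp
  ultimately show ?thesis by blast
qed

lemma fiber_shift:
  assumes "group G" "finite (carrier G)" "is_rep G \<tau>" "\<xi> \<in> carrier G"
  shows "(\<Sum>x\<in>{x\<in>carrier G. \<tau> x = \<tau> \<xi>}. f x) = (\<Sum>k\<in>{x\<in>carrier G. \<tau> x = 1}. f (\<xi> \<otimes>\<^bsub>G\<^esub> k))"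
proof -
  interpret G: group G by (rule assms(1))
  have mult: "\<And>x y. x \<in> carrier G \<Longrightarrow> y \<in> carrier G \<Longrightarrow> \<tau> (x \<otimes>\<^bsub>G\<^esub> y) = \<tau> x * \<tau> y"
    using assms(3) unfolding is_rep_def by blast
  have one: "\<tau> \<one>\<^bsub>G\<^esub> = 1" using rep_one[OF assms(1,3)] .
  have ic: "inv\<^bsub>G\<^esub> \<xi> \<in> carrier G" using assms(4) by simp
  have inv: "\<tau> (inv\<^bsub>G\<^esub> \<xi>) * \<tau> \<xi> = 1"
    using mult[OF ic assms(4)] one assms(4) by simp
  show ?thesis
  proof (rule sum.reindex_bij_witness[where i = "\<lambda>k. \<xi> \<otimes>\<^bsub>G\<^esub> k" and j = "\<lambda>x. inv\<^bsub>G\<^esub> \<xi> \<otimes>\<^bsub>G\<^esub> x"])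
    fix a assume a: "a \<in> {x \<in> carrier G. \<tau> x = \<tau> \<xi>}"
    then have ac: "a \<in> carrier G" by simp
    show "\<xi> \<otimes>\<^bsub>G\<^esub> (inv\<^bsub>G\<^esub> \<xi> \<otimes>\<^bsub>G\<^esub> a) = a"
      using ac ic assms(4) by (simp add: G.m_assoc[symmetric])
    show "inv\<^bsub>G\<^esub> \<xi> \<otimes>\<^bsub>G\<^esub> a \<in> {x \<in> carrier G. \<tau> x = 1}"
      using a ac ic inv mult[OF ic ac] by simp
  next
    fix b assume b: "b \<in> {x \<in> carrier G. \<tau> x = 1}"
    then have bc: "b \<in> carrier G" by simp
    show "inv\<^bsub>G\<^esub> \<xi> \<otimes>\<^bsub>G\<^esub> (\<xi> \<otimes>\<^bsub>G\<^esub> b) = b"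
      using bc ic assms(4) by (simp add: G.m_assoc[symmetric])
    show "\<xi> \<otimes>\<^bsub>G\<^esub> b \<in> {x \<in> carrier G. \<tau> x = \<tau> \<xi>}"
      using b bc assms(4) mult[OF assms(4) bc] by simp
  next
    fix a assume a: "a \<in> {x \<in> carrier G. \<tau> x = \<tau> \<xi>}"
    then have ac: "a \<in> carrier G" by simp
    then show "f (\<xi> \<otimes>\<^bsub>G\<^esub> (inv\<^bsub>G\<^esub> \<xi> \<otimes>\<^bsub>G\<^esub> a)) = f a"
      using ic assms(4) by (simp add: G.m_assoc[symmetric])
  qed
qed

lemma sum_vanish:
  assumes "group G" "finite (carrier G)" "is_rep G \<tau>" "is_rep G \<rho>"
    "k0 \<in> carrier G" "\<tau> k0 = 1" "\<rho> k0 \<noteq> 1"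
  shows "(\<Sum>k\<in>{x\<in>carrier G. \<tau> x = 1}. \<rho> k) = 0"
proof -
  let ?S = "(\<Sum>k\<in>{x\<in>carrier G. \<tau> x = 1}. \<rho> k)"
  have "?S = (\<Sum>k\<in>{x\<in>carrier G. \<tau> x = 1}. \<rho> (k0 \<otimes>\<^bsub>G\<^esub> k))"
    using fiber_shift[OF assms(1-3,5), of \<rho>] assms(6) by simp
  also have "\<dots> = (\<Sum>k\<in>{x\<in>carrier G. \<tau> x = 1}. \<rho> k0 * \<rho> k)"
  proof (rule sum.cong[OF refl])
    fix k assume "k \<in> {x\<in>carrier G. \<tau> x = 1}"
    then have "k \<in> carrier G" by simp
    then show "\<rho> (k0 \<otimes>\<^bsub>G\<^esub> k) = \<rho> k0 * \<rho> k"
    proof -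
      have "\<forall>x\<in>carrier G. \<forall>y\<in>carrier G. \<rho> (x \<otimes>\<^bsub>G\<^esub> y) = \<rho> x * \<rho> y"
        using assms(4) unfolding is_rep_def by (rule conjunct2)
      then show ?thesis using \<open>k \<in> carrier G\<close> assms(5) by blast
    qed
  qed
  also have "\<dots> = \<rho> k0 * ?S" by (rule sum_distrib_left[symmetric])
  finally have "?S - \<rho> k0 * ?S = 0" by (rule eq_iff_diff_eq_0[THEN iffD1])
  then have "(1 - \<rho> k0) * ?S = 0" by (simp only: left_diff_distrib mult_1)
  then show ?thesis using assms(7) by (simp only: mult_eq_0_iff right_minus_eq) auto
qed

lemma j_split:
  assumes "finite (carrier G)" "\<not> (\<forall>y\<in>carrier G. \<tau> y = 1)"
  shows "j_map G \<rho> (b_elem G p \<tau>) =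
    (\<Sum>k\<in>{x\<in>carrier G. \<tau> x = 1}. \<rho> k) - (\<Sum>k\<in>{x\<in>carrier G. \<tau> x = omega p}. \<rho> k)"
proof -
  have "j_map G \<rho> (b_elem G p \<tau>) =
     (\<Sum>x\<in>carrier G. (if \<tau> x = 1 then \<rho> x else 0) - (if \<tau> x = omega p then \<rho> x else 0))"
    unfolding j_map_def b_elem_def using assms(2) by (intro sum.cong) auto
  also have "\<dots> = (\<Sum>x\<in>carrier G. (if \<tau> x = 1 then \<rho> x else 0)) -
       (\<Sum>x\<in>carrier G. (if \<tau> x = omega p then \<rho> x else 0))"
    by (rule sum_subtractf)
  finally show ?thesis by (simp only: sum.inter_filter[OF assms(1)])
qed

lemma j_shift:
  assumes "group G" "finite (carrier G)" "is_rep G \<tau>" "is_rep G \<rho>"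
    "\<xi> \<in> carrier G" "\<tau> \<xi> = omega p"
  shows "(\<Sum>k\<in>{x\<in>carrier G. \<tau> x = omega p}. \<rho> k) = \<rho> \<xi> * (\<Sum>k\<in>{x\<in>carrier G. \<tau> x = 1}. \<rho> k)"
proof -
  have "(\<Sum>k\<in>{x\<in>carrier G. \<tau> x = omega p}. \<rho> k) = (\<Sum>k\<in>{x\<in>carrier G. \<tau> x = 1}. \<rho> (\<xi> \<otimes>\<^bsub>G\<^esub> k))"
    using fiber_shift[OF assms(1-3,5), of \<rho>] assms(6) by simp
  also have "\<dots> = (\<Sum>k\<in>{x\<in>carrier G. \<tau> x = 1}. \<rho> \<xi> * \<rho> k)"
  proof (rule sum.cong[OF refl])
    fix k assume "k \<in> {x\<in>carrier G. \<tau> x = 1}"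
    then have "k \<in> carrier G" by simp
    then show "\<rho> (\<xi> \<otimes>\<^bsub>G\<^esub> k) = \<rho> \<xi> * \<rho> k"
    proof -
      have "\<forall>x\<in>carrier G. \<forall>y\<in>carrier G. \<rho> (x \<otimes>\<^bsub>G\<^esub> y) = \<rho> x * \<rho> y"
        using assms(4) unfolding is_rep_def by (rule conjunct2)
      then show ?thesis using \<open>k \<in> carrier G\<close> assms(5) by blast
    qed
  qed
  finally show ?thesis by (simp only: sum_distrib_left)
qed

theorem mainTheorem2:
  fixes G :: "('a, 'b) monoid_scheme" and p e :: nat
  assumes "prime p" and "e \<ge> 1"
    and "comm_group G" and "finite (carrier G)" and "card (carrier G) = p ^ e"
  shows "(\<forall>\<rho> \<tau>. is_rep G \<rho> \<and> is_rep G \<tau> \<and> \<not> rep_equiv G \<rho> \<tau> \<longrightarrow>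
            j_map G \<rho> (b_elem G p \<tau>) = 0)
       \<and> j_map G triv_rep (b_elem G p triv_rep) = of_nat p ^ e
       \<and> (\<forall>\<rho> k. is_rep G \<rho> \<and> has_level G p \<rho> k \<and> k > 0 \<longrightarrow>
            j_map G \<rho> (b_elem G p \<rho>) = of_nat p ^ (e - k) * (1 - omega p))"
proof (intro conjI allI impI)
  have grp: "group G" using assms(3) by (simp add: comm_group_def)
  have trep: "is_rep G triv_rep" by (simp add: is_rep_def triv_rep_def)
  fix \<rho> \<tau> assume H: "is_rep G \<rho> \<and> is_rep G \<tau> \<and> \<not> rep_equiv G \<rho> \<tau>"
  then have r: "is_rep G \<rho>" and t: "is_rep G \<tau>" and ne: "rep_kernel G \<rho> \<noteq> rep_kernel G \<tau>"
    by (auto simp: rep_equiv_def)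
  show "j_map G \<rho> (b_elem G p \<tau>) = 0"
  proof (cases "\<forall>y\<in>carrier G. \<tau> y = 1")
    case True
    then have "rep_kernel G \<tau> = carrier G" by (auto simp: rep_kernel_def)
    then obtain k0 where k0: "k0 \<in> carrier G" "\<rho> k0 \<noteq> 1" using ne by (auto simp: rep_kernel_def)
    have "j_map G \<rho> (b_elem G p \<tau>) = (\<Sum>k\<in>{x\<in>carrier G. triv_rep x = 1}. \<rho> k)"
      unfolding j_map_def b_elem_def triv_rep_def using True by simp
    also have "\<dots> = 0" using sum_vanish[OF grp assms(4) trep r k0(1) _ k0(2)] by (simp add: triv_rep_def)
    finally show ?thesis .
  next
    case False
    note js = j_split[OF assms(4) False, of \<rho> p]
    show ?thesis
    proof (cases "\<exists>k0\<in>carrier G. \<tau> k0 = 1 \<and> \<rho> k0 \<noteq> 1")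
      case True
      then obtain k0 where k0: "k0 \<in> carrier G" "\<tau> k0 = 1" "\<rho> k0 \<noteq> 1" by blast
      obtain \<xi> where xi: "\<xi> \<in> carrier G" "\<tau> \<xi> = omega p"
        using False rep_omega[OF assms(1) grp assms(4,5) t] by blast
      show ?thesis using js j_shift[OF grp assms(4) t r xi] sum_vanish[OF grp assms(4) t r k0] by simp
    next
      case False
      then have sub: "rep_kernel G \<tau> \<subseteq> rep_kernel G \<rho>" unfolding rep_kernel_def by blast
      have "\<not> rep_kernel G \<rho> \<subseteq> rep_kernel G \<tau>"
        using ne sub subset_antisym by metis
      then obtain y where "y \<in> rep_kernel G \<rho>" "y \<notin> rep_kernel G \<tau>"
        by (meson subsetI)
      then have y: "y \<in> carrier G" "\<rho> y = 1" "\<tau> y \<noteq> 1" unfolding rep_kernel_def by simp_all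
      have "y [^]\<^bsub>G\<^esub> order G = \<one>\<^bsub>G\<^esub>" using grp y(1) by (rule group.pow_order_eq_1)
      then have "\<tau> (y [^]\<^bsub>G\<^esub> (p ^ e)) = 1" using assms(5) rep_one[OF grp t] by (simp add: order_def)
      then have "\<tau> y ^ (p ^ e) = 1" using rep_pow[OF grp t y(1)] by simp
      then obtain n where n: "\<tau> y ^ n = omega p" using root_pe_omega assms(1) y by blast
      have xi: "y [^]\<^bsub>G\<^esub> n \<in> carrier G" "\<tau> (y [^]\<^bsub>G\<^esub> n) = omega p"
        using n rep_pow[OF grp t y(1)] monoid.nat_pow_closed[OF group.is_monoid[OF grp] y(1)] by simp_all
      have "\<rho> (y [^]\<^bsub>G\<^esub> n) = 1" using rep_pow[OF grp r y(1)] y by simp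
      then show ?thesis using js j_shift[OF grp assms(4) t r xi] by simp
    qed
  qed
next
  show "j_map G triv_rep (b_elem G p triv_rep) = of_nat p ^ e"
    unfolding j_map_def b_elem_def triv_rep_def using assms(5) by simp
next
  have grp: "group G" using assms(3) by (simp add: comm_group_def)
  fix \<rho> k assume H: "is_rep G \<rho> \<and> has_level G p \<rho> k \<and> 0 < k"
  then have r: "is_rep G \<rho>" and lev: "card (\<rho> ` carrier G) = p ^ k" and k: "k > 0"
    by (auto simp: has_level_def)
  have p1: "p > 1" using assms(1) prime_gt_1_nat by blast
  have nt: "\<not> (\<forall>y\<in>carrier G. \<rho> y = 1)"
  proof
    assume "\<forall>y\<in>carrier G. \<rho> y = 1"
    moreover have "\<one>\<^bsub>G\<^esub> \<in> carrier G" using grp by (rule monoid.one_closed[OF group.is_monoid])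
    ultimately have "\<rho> ` carrier G = {1}" by (force intro: rev_image_eqI)
    then have "p ^ k = 1" using lev by simp
    then show False using p1 k by simp
  qed
  then obtain x0 where "x0 \<in> carrier G" "\<rho> x0 \<noteq> 1" by blast
  then obtain \<xi> where xi: "\<xi> \<in> carrier G" "\<rho> \<xi> = omega p"
    using rep_omega[OF assms(1) grp assms(4,5) r] by blast
  define K where "K = {x\<in>carrier G. \<rho> x = 1}"
  have "(\<Sum>k\<in>K. \<rho> k) = (\<Sum>k\<in>K. 1)" by (rule sum.cong) (simp_all add: K_def)
  then have sK: "(\<Sum>k\<in>K. \<rho> k) = of_nat (card K)" by simp
  have fib: "card {x\<in>carrier G. \<rho> x = c} = card K" if cin: "c \<in> \<rho> ` carrier G" for c
  proof -
    obtain z where z: "z \<in> carrier G" "c = \<rho> z" using cin by blast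
    have "(\<Sum>x\<in>{x\<in>carrier G. \<rho> x = \<rho> z}. (1::nat)) = (\<Sum>k\<in>K. 1)"
      unfolding K_def using fiber_shift[OF grp assms(4) r z(1), of "\<lambda>_. 1::nat"] by simp
    then show ?thesis using z by simp
  qed
  have "card (carrier G) = (\<Sum>c\<in>\<rho> ` carrier G. card {x\<in>carrier G. \<rho> x = c})"
    using sum.image_gen[OF assms(4), of "\<lambda>_. 1::nat" \<rho>] by simp
  also have "\<dots> = p ^ k * card K" using fib lev by simp
  finally have eq: "p ^ e = p ^ k * card K" using assms(5) by simp
  have "\<one>\<^bsub>G\<^esub> \<in> K" unfolding K_def using rep_one[OF grp r] monoid.one_closed[OF group.is_monoid[OF grp]] by simp
  then have "K \<noteq> {}" by blast
  then have "card K \<ge> 1" unfolding K_def using assms(4) by (simp add: Suc_leI card_gt_0_iff)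
  then have "p ^ k \<le> p ^ e" using eq by simp
  then have "k \<le> e" using p1 power_le_imp_le_exp by blast
  then have "p ^ e = p ^ k * p ^ (e - k)" by (simp add: power_add[symmetric])
  then have cK: "card K = p ^ (e - k)" using eq p1 by simp
  have "j_map G \<rho> (b_elem G p \<rho>) = (\<Sum>k\<in>K. \<rho> k) - \<rho> \<xi> * (\<Sum>k\<in>K. \<rho> k)"
    using j_split[OF assms(4) nt, of \<rho> p] j_shift[OF grp assms(4) r r xi] unfolding K_def by simp
  then show "j_map G \<rho> (b_elem G p \<rho>) = of_nat p ^ (e - k) * (1 - omega p)"
    using sK cK xi by (simp add: algebra_simps)
qed

end
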